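(* Let $G$ be a directed graph on vertex set $V$ with $|V|=n$, and let $\pi:V\to[1,n]$ be such that (a) if $x,y$ lie in distinct strongly connected components of $G$ and there is an $x\to y$ path in $G$, then $\pi(x)<\pi(y)$, and (b) if $x,y$ are strongly connected then $\pi(x)=\pi(y)$. Let $s\in V$, let $V_s$ be the set of vertices reachable from $s$ in $G$, let $\mathcal{S}_s$ be the set of strongly connected components of $G$ reachable from $s$, and let $\mathcal{S}_s'\subseteq\mathcal{S}_s$ be arbitrary. Suppose $H\subseteq G[V_s]$ with $V(H)=V_s$ satisfies: (1) for each $t\in V_s\setminus\{s\}$ for which some edge $vt\in E(G)$ with $v\in\bigcup\mathcal{S}_s'$ exists, $H$ contains such an edge $vt$ with $\pi(v)$ minimal among all $v\in\bigcup\mathcal{S}_s'$ with $vt\in E(G)$; (2) for all $(X,Y)\in(\mathcal{S}_s\setminus\mathcal{S}_s')\times\mathcal{S}_s$, $H$ contains an edge $xy\in E(G)\cap(X\times Y)$ if such an edge exists; (3) for each $S\in\mathcal{S}_s$, $H[S]$ is strongly connected. Then all vertices of $V_s$ are reachable from $s$ in $H$.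
   Context: Strongly connected components are the equivalence classes of mutual reachability; $G[U]$ denotes the subgraph induced by $U$. *)

theory Defs
  imports Main
begin

definition reach :: "('a \<times> 'a) set \<Rightarrow> 'a \<Rightarrow> 'a \<Rightarrow> bool" where
  "reach E x y \<longleftrightarrow> (x, y) \<in> E\<^sup>*"

definition strongly_connected_vertices :: "('a \<times> 'a) set \<Rightarrow> 'a \<Rightarrow> 'a \<Rightarrow> bool" where
  "strongly_connected_vertices E x y \<longleftrightarrow> reach E x y \<and> reach E y x"

definition sccs :: "'a set \<Rightarrow> ('a \<times> 'a) set \<Rightarrow> 'a set set" where
  "sccs V E = {{y \<in> V. strongly_connected_vertices E x y} | x. x \<in> V}"

definition induced_edges :: "('a \<times> 'a) set \<Rightarrow> 'a set \<Rightarrow> ('a \<times> 'a) set" where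
  "induced_edges E U = E \<inter> (U \<times> U)"

definition strongly_connected_set :: "('a \<times> 'a) set \<Rightarrow> 'a set \<Rightarrow> bool" where
  "strongly_connected_set E U \<longleftrightarrow>
     (\<forall>x\<in>U. \<forall>y\<in>U. reach (induced_edges E U) x y)"

end

theory Submission
  imports Defs
begin

lemma last_entry:
  assumes "(a, b) \<in> E\<^sup>*" "a \<notin> P" "b \<in> P"
  shows "\<exists>u w. (a, u) \<in> E\<^sup>* \<and> (u, w) \<in> E \<and> u \<notin> P \<and> w \<in> P \<and> (w, b) \<in> E\<^sup>*"
  using assms
proof (induction rule: rtrancl_induct)
  case base
  then show ?case by simp
next
  case (step y z)
  show ?case
  proof (cases "y \<in> P")
    case True
    with step obtain u w where "(a, u) \<in> E\<^sup>*" "(u, w) \<in> E" "u \<notin> P" "w \<in> P" "(w, y) \<in> E\<^sup>*"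
      by blast
    then show ?thesis using step(2) by (meson rtrancl.rtrancl_into_rtrancl)
  next
    case False
    then show ?thesis using step by blast
  qed
qed

theorem lemma14:
  fixes V :: "'a set" and E EH :: "('a \<times> 'a) set" and \<pi> :: "'a \<Rightarrow> nat"
    and s :: 'a and Vs :: "'a set" and Ss Ss' :: "'a set set"
  assumes finV: "finite V"
    and EV: "E \<subseteq> V \<times> V"
    and pi_range: "\<forall>x\<in>V. \<pi> x \<in> {1..card V}"
    and pi_a: "\<forall>x\<in>V. \<forall>y\<in>V. \<not> strongly_connected_vertices E x y \<and> reach E x y \<longrightarrow> \<pi> x < \<pi> y"
    and pi_b: "\<forall>x\<in>V. \<forall>y\<in>V. strongly_connected_vertices E x y \<longrightarrow> \<pi> x = \<pi> y"
    and sV: "s \<in> V"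
    and Vs_def: "Vs = {v \<in> V. reach E s v}"
    and Ss_def: "Ss = {S \<in> sccs V E. \<exists>x\<in>S. reach E s x}"
    and Ss'_sub: "Ss' \<subseteq> Ss"
    and H_sub: "EH \<subseteq> induced_edges E Vs"
    and H1: "\<forall>t\<in>Vs - {s}. (\<exists>v\<in>\<Union>Ss'. (v, t) \<in> E) \<longrightarrow>
              (\<exists>v\<in>\<Union>Ss'. (v, t) \<in> EH \<and> (\<forall>w\<in>\<Union>Ss'. (w, t) \<in> E \<longrightarrow> \<pi> v \<le> \<pi> w))"
    and H2: "\<forall>X\<in>Ss - Ss'. \<forall>Y\<in>Ss. (\<exists>x\<in>X. \<exists>y\<in>Y. (x, y) \<in> E) \<longrightarrow>
              (\<exists>x\<in>X. \<exists>y\<in>Y. (x, y) \<in> EH)"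
    and H3: "\<forall>S\<in>Ss. strongly_connected_set EH S"
  shows "\<forall>v\<in>Vs. reach EH s v"
proof -
  define C where "C t = {y \<in> V. strongly_connected_vertices E t y}" for t
  have scv: "strongly_connected_vertices E x y \<longleftrightarrow> (x, y) \<in> E\<^sup>* \<and> (y, x) \<in> E\<^sup>*" for x y
    unfolding strongly_connected_vertices_def reach_def by simp
  have CSs: "C t \<in> Ss" if "t \<in> Vs" for t
    using that unfolding Ss_def sccs_def C_def Vs_def
    by (auto simp: scv reach_def)
  have Cin: "t \<in> C t" if "t \<in> V" for t using that by (simp add: C_def scv)
  have HC: "(x, y) \<in> EH\<^sup>*" if "t \<in> Vs" "x \<in> C t" "y \<in> C t" for t x y
  proof -
    have "(x, y) \<in> (induced_edges EH (C t))\<^sup>*"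
      using H3 CSs[OF that(1)] that(2,3) unfolding strongly_connected_set_def reach_def by blast
    moreover have "induced_edges EH (C t) \<subseteq> EH" by (auto simp: induced_edges_def)
    ultimately show ?thesis using rtrancl_mono by blast
  qed
  have VsSs: "v \<in> Vs" if "v \<in> \<Union>Ss" for v
  proof -
    from that obtain S where S: "S \<in> Ss" "v \<in> S" by blast
    then obtain z x where "S = {y \<in> V. strongly_connected_vertices E z y}" "x \<in> S" "(s, x) \<in> E\<^sup>*"
      unfolding Ss_def sccs_def reach_def by blast
    then have "v \<in> V" "(z, v) \<in> E\<^sup>*" "(x, z) \<in> E\<^sup>*" using S(2) unfolding scv by blast+
    then have "(s, v) \<in> E\<^sup>*" using \<open>(s, x) \<in> E\<^sup>*\<close> by (meson rtrancl_trans)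
    then show ?thesis using \<open>v \<in> V\<close> unfolding Vs_def reach_def by blast
  qed
  have main: "\<forall>t\<in>Vs. \<pi> t = n \<longrightarrow> (s, t) \<in> EH\<^sup>*" for n
  proof (induction n rule: less_induct)
    case (less n)
    show ?case
    proof (intro ballI impI)
      fix t assume tVs: "t \<in> Vs" and pt: "\<pi> t = n"
      have tV: "t \<in> V" and st: "(s, t) \<in> E\<^sup>*" using tVs by (auto simp: Vs_def reach_def)
      show "(s, t) \<in> EH\<^sup>*"
      proof (cases "s \<in> C t")
        case True
        then show ?thesis using HC[OF tVs True Cin[OF tV]] by simp
      next
        case False
        obtain u w where uw: "(s, u) \<in> E\<^sup>*" "(u, w) \<in> E" "u \<notin> C t" "w \<in> C t" "(w, t) \<in> E\<^sup>*"
          using last_entry[OF st False Cin[OF tV]] by blast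
        have uV: "u \<in> V" and wV: "w \<in> V" using uw(2) EV by auto
        have wt: "(t, w) \<in> E\<^sup>*" using uw(4) by (simp add: C_def scv)
        have nuw: "\<not> strongly_connected_vertices E u w"
        proof
          assume "strongly_connected_vertices E u w"
          then have "(w, u) \<in> E\<^sup>*" by (simp add: scv)
          moreover have "(t, u) \<in> E\<^sup>*" using wt \<open>(w, u) \<in> E\<^sup>*\<close> by (rule rtrancl_trans)
          moreover have "(u, t) \<in> E\<^sup>*" using uw(2,5) by (rule converse_rtrancl_into_rtrancl)
          ultimately have "u \<in> C t" using uV unfolding C_def scv by blast
          with uw(3) show False by simp
        qed
        have "reach E u w" using uw(2) by (simp add: reach_def)
        then have "\<pi> u < \<pi> w" using pi_a uV wV nuw by blast
        moreover have "strongly_connected_vertices E w t" using wt uw(5) by (simp add: scv)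
        then have "\<pi> w = \<pi> t" using pi_b wV tV by blast
        ultimately have put: "\<pi> u < \<pi> t" by simp
        have uVs: "u \<in> Vs" using uV uw(1) by (simp add: Vs_def reach_def)
        have wVs: "w \<in> Vs" using wV uw(1,2) by (simp add: Vs_def reach_def)
        have ws: "w \<noteq> s" using False uw(4) by auto
        show ?thesis
        proof (cases "C u \<in> Ss'")
          case True
          have "u \<in> \<Union>Ss'" using True Cin[OF uV] by blast
          then obtain v where v: "v \<in> \<Union>Ss'" "(v, w) \<in> EH" "\<pi> v \<le> \<pi> u"
            using H1 wVs ws uw(2) by blast
          have vVs: "v \<in> Vs" using VsSs v(1) Ss'_sub by blast
          have "\<pi> v < n" using put v(3) pt by simp
          then have "(s, v) \<in> EH\<^sup>*" using less vVs by blast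
          moreover have "(w, t) \<in> EH\<^sup>*" using HC[OF tVs uw(4) Cin[OF tV]] .
          ultimately show ?thesis using v(2) by (meson rtrancl_into_rtrancl rtrancl_trans)
        next
          case False
          have "C u \<in> Ss - Ss'" using False CSs[OF uVs] by simp
          moreover have "\<exists>x\<in>C u. \<exists>y\<in>C t. (x, y) \<in> E" using Cin[OF uV] uw(2,4) by blast
          ultimately obtain x y where xy: "x \<in> C u" "y \<in> C t" "(x, y) \<in> EH"
            using H2 CSs[OF tVs] by blast
          have xV: "x \<in> V" and ux: "(u, x) \<in> E\<^sup>*" "(x, u) \<in> E\<^sup>*" using xy(1) by (auto simp: C_def scv)
          have "strongly_connected_vertices E x u" using ux by (simp add: scv)
          then have "\<pi> x = \<pi> u" using pi_b xV uV by blast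
          moreover have xVs: "x \<in> Vs" proof -
            have "(s, x) \<in> E\<^sup>*" using uw(1) ux(1) by (rule rtrancl_trans)
            then show ?thesis using xV by (simp add: Vs_def reach_def)
          qed
          ultimately have "\<pi> x < n" "x \<in> Vs" using put pt by simp_all
          then have "(s, x) \<in> EH\<^sup>*" using less by blast
          moreover have "(y, t) \<in> EH\<^sup>*" using HC[OF tVs xy(2) Cin[OF tV]] .
          ultimately show ?thesis using xy(3) by (meson rtrancl_into_rtrancl rtrancl_trans)
        qed
      qed
    qed
  qed
  show ?thesis using main by (auto simp: reach_def)
qed

end
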